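(* Let $X\subset\mathbb{Z}^n$ and let $d$ be an $\ell_p$ metric on $X$ for some $1\le p\le\infty$, so that $(X,d,c_1)$ is a digital metric space. Let $T:X\to X$ be a weakly uniformly strict digital contraction. If $X$ is $c_1$-connected, then $T$ is constant.
   Context: Distinct $p,q\in\mathbb{Z}^n$ are $c_1$-adjacent if they differ by exactly $1$ in exactly one coordinate. $X$ is $c_1$-connected if the graph on $X$ given by $c_1$-adjacency is connected. The $\ell_p$ metric is $d(x,y)=(\sum_i|x_i-y_i|^p)^{1/p}$ for $1\le p<\infty$ and $\max_i|x_i-y_i|$ for $p=\infty$. $T:X\to X$ is a weakly uniformly strict digital contraction if for every $\varepsilon>0$ there exists $\delta>0$ such that for all $x,y\in X$, $\varepsilon\le d(x,y)<\varepsilon+\delta$ implies $d(T(x),T(y))<\varepsilon$. *)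

theory Defs
  imports "HOL-Analysis.Analysis" "HOL-Library.Extended_Real"
begin

definition c1_adj :: "int ^ 'n \<Rightarrow> int ^ 'n \<Rightarrow> bool" where
  "c1_adj p q \<longleftrightarrow> p \<noteq> q \<and>
     (\<exists>i. \<bar>p $ i - q $ i\<bar> = 1 \<and> (\<forall>j. j \<noteq> i \<longrightarrow> p $ j = q $ j))"

definition c1_connected :: "(int ^ 'n) set \<Rightarrow> bool" where
  "c1_connected X \<longleftrightarrow>
     (\<forall>x\<in>X. \<forall>y\<in>X. (\<lambda>a b. a \<in> X \<and> b \<in> X \<and> c1_adj a b)\<^sup>*\<^sup>* x y)"

definition lp_dist :: "ereal \<Rightarrow> int ^ 'n \<Rightarrow> int ^ 'n \<Rightarrow> real" where
  "lp_dist p x y =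
     (if p = \<infinity> then Max (range (\<lambda>i. real_of_int \<bar>x $ i - y $ i\<bar>))
      else (\<Sum>i\<in>UNIV. real_of_int \<bar>x $ i - y $ i\<bar> powr real_of_ereal p) powr (1 / real_of_ereal p))"

definition weakly_uniformly_strict_digital_contraction ::
  "('a \<Rightarrow> 'a \<Rightarrow> real) \<Rightarrow> 'a set \<Rightarrow> ('a \<Rightarrow> 'a) \<Rightarrow> bool" where
  "weakly_uniformly_strict_digital_contraction d X T \<longleftrightarrow>
     (\<forall>\<epsilon>>0. \<exists>\<delta>>0. \<forall>x\<in>X. \<forall>y\<in>X.
        \<epsilon> \<le> d x y \<and> d x y < \<epsilon> + \<delta> \<longrightarrow> d (T x) (T y) < \<epsilon>)"

end

theory Submission
  imports Defs
begin

lemma adj_dist: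
  fixes x y :: "int ^ 'n" and p :: ereal
  assumes p: "1 \<le> p" and a: "c1_adj x y"
  shows "lp_dist p x y = 1"
proof -
  from a obtain i where i: "\<bar>x $ i - y $ i\<bar> = 1" and o: "\<And>j. j \<noteq> i \<Longrightarrow> x $ j = y $ j"
    unfolding c1_adj_def by blast
  have f: "\<And>j. real_of_int \<bar>x $ j - y $ j\<bar> = (if j = i then 1 else 0)"
    using i o by auto
  show ?thesis
  proof (cases "p = \<infinity>")
    case True
    have "range (\<lambda>j. real_of_int \<bar>x $ j - y $ j\<bar>) = (\<lambda>j. if j = i then 1 else 0) ` UNIV"
      using f by simp
    moreover have "finite ((\<lambda>j. if j = i then 1 else (0::real)) ` UNIV)" by simp
    moreover have "\<forall>v\<in>(\<lambda>j. if j = i then 1 else (0::real)) ` UNIV. v \<le> 1" by auto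
    moreover have "(1::real) \<in> (\<lambda>j. if j = i then 1 else (0::real)) ` UNIV" by force
    ultimately show ?thesis unfolding lp_dist_def using True
      by (metis (no_types, lifting) Max_eqI)
  next
    case False
    have q: "real_of_ereal p \<ge> 1" using p False
      by (cases p) auto
    have "(\<Sum>j\<in>UNIV. real_of_int \<bar>x $ j - y $ j\<bar> powr real_of_ereal p)
        = (\<Sum>j\<in>UNIV. if j = i then 1 else 0)"
    proof (rule sum.cong)
      fix j :: 'n
      show "real_of_int \<bar>x $ j - y $ j\<bar> powr real_of_ereal p = (if j = i then 1 else 0)"
        unfolding f by simp
    qed simp
    also have "\<dots> = 1" by simp
    finally show ?thesis unfolding lp_dist_def using False by simp
  qed
qed

lemma ne_dist:
  fixes a b :: "int ^ 'n" and p :: ereal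
  assumes p: "1 \<le> p" and ne: "a \<noteq> b"
  shows "lp_dist p a b \<ge> 1"
proof -
  from ne obtain i where "a $ i \<noteq> b $ i" by (metis vec_eq_iff)
  then have i: "real_of_int \<bar>a $ i - b $ i\<bar> \<ge> 1" by linarith
  show ?thesis
  proof (cases "p = \<infinity>")
    case True
    have m: "real_of_int \<bar>a $ i - b $ i\<bar> \<le> Max (range (\<lambda>j. real_of_int \<bar>a $ j - b $ j\<bar>))"
      by (rule Max_ge) auto
    have e: "lp_dist p a b = Max (range (\<lambda>j. real_of_int \<bar>a $ j - b $ j\<bar>))"
      unfolding lp_dist_def if_P[OF True] by (rule refl)
    show ?thesis unfolding e by (rule order_trans[OF i m])
  next
    case False
    have q: "real_of_ereal p \<ge> 1" using p False
      by (cases p) auto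
    have "1 \<le> real_of_int \<bar>a $ i - b $ i\<bar> powr real_of_ereal p"
      using i q by (simp add: ge_one_powr_ge_zero)
    also have "\<dots> \<le> (\<Sum>j\<in>UNIV. real_of_int \<bar>a $ j - b $ j\<bar> powr real_of_ereal p)"
      by (rule member_le_sum) auto
    finally have "1 \<le> (\<Sum>j\<in>UNIV. real_of_int \<bar>a $ j - b $ j\<bar> powr real_of_ereal p)" .
    then have "1 \<le> (\<Sum>j\<in>UNIV. real_of_int \<bar>a $ j - b $ j\<bar> powr real_of_ereal p) powr (1 / real_of_ereal p)"
      using q by (simp add: ge_one_powr_ge_zero)
    then show ?thesis unfolding lp_dist_def using False by simp
  qed
qed

theorem corollary8p6:
  fixes X :: "(int ^ 'n) set" and T :: "int ^ 'n \<Rightarrow> int ^ 'n" and p :: ereal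
  assumes "1 \<le> p"
    and "T ` X \<subseteq> X"
    and "weakly_uniformly_strict_digital_contraction (lp_dist p) X T"
    and "c1_connected X"
  shows "\<exists>c. \<forall>x\<in>X. T x = c"
proof -
  obtain \<delta> where d: "\<delta> > 0" and H: "\<forall>x\<in>X. \<forall>y\<in>X.
        1 \<le> lp_dist p x y \<and> lp_dist p x y < 1 + \<delta> \<longrightarrow> lp_dist p (T x) (T y) < 1"
    using assms(3) unfolding weakly_uniformly_strict_digital_contraction_def
    using zero_less_one by blast
  have stepT: "T x = T y" if xy: "x \<in> X" "y \<in> X" "c1_adj x y" for x y
  proof (rule ccontr)
    assume "T x \<noteq> T y"
    then have g: "lp_dist p (T x) (T y) \<ge> 1" using ne_dist assms(1) by blast
    have e: "lp_dist p x y = 1" using adj_dist assms(1) xy(3) by blast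
    have "lp_dist p (T x) (T y) < 1" using H xy(1,2) e d by simp
    then show False using g by simp
  qed
  have chain: "T x = T y" if "(\<lambda>a b. a \<in> X \<and> b \<in> X \<and> c1_adj a b)\<^sup>*\<^sup>* x y" for x y
    using that
  proof (induction rule: rtranclp_induct)
    case base then show ?case by (rule refl)
  next
    case (step y z)
    have "T y = T z" using stepT step.hyps(2) by blast
    then show ?case using step.IH by (rule trans[rotated])
  qed
  show ?thesis
  proof (cases "X = {}")
    case True then show ?thesis by blast
  next
    case False
    then obtain x0 where x0: "x0 \<in> X" by blast
    have "\<forall>x\<in>X. T x = T x0"
    proof
      fix x assume "x \<in> X"
      then show "T x = T x0" using chain assms(4) x0 unfolding c1_connected_def by blast
    qed
    then show ?thesis by blast
  qed
qed

end
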